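(* Let $n\geq 1$ be an integer and let $0\leq p_0\leq p_1\leq\cdots\leq p_n\leq 1$. Then there exists an index $i\in\{1,\dots,n\}$ such that for every $\alpha\in[0,1]$, \[ h_2(\alpha p_{i-1}+(1-\alpha)p_i)-\alpha h_2(p_{i-1})-(1-\alpha)h_2(p_i)\leq \frac{8}{(n+1)^2}. \]
   Context: $h_2(p)=-p\log p-(1-p)\log(1-p)$ is the binary entropy function with natural logarithm. *)

theory Defs
  imports Complex_Main
begin

text \<open>Binary entropy with natural logarithm, using the convention 0 log 0 = 0.\<close>
definition h2 :: "real \<Rightarrow> real" where
  "h2 p = (if p = 0 \<or> p = 1 then 0 else - p * ln p - (1 - p) * ln (1 - p))"

end

theory Submission imports Defs begin

lemma key_poly:
  fixes A B X :: real
  assumes "0 \<le> A" "A \<le> X" "X \<le> B"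
  shows "A*B*((B-X)*(X-A)) \<le> (1/8)*(B-A)^2*(A+B)*X"
proof -
  define G where "G = sqrt (A*B)"
  have G0: "G \<ge> 0" and GG: "G^2 = A*B" using assms by (auto simp: G_def)
  have SG: "A + B - 2*G \<ge> 0"
  proof -
    have "A + B - 2*G = (sqrt A - sqrt B)^2" using assms
      by (simp add: G_def real_sqrt_mult power2_eq_square algebra_simps)
    thus ?thesis by simp
  qed
  have h1: "(B-X)*(X-A) \<le> X*(A+B-2*G)"
  proof -
    have "X*(A+B-2*G) - (B-X)*(X-A) = (X - G)^2" using GG by (simp add: power2_eq_square algebra_simps)
    thus ?thesis by (smt (verit) zero_le_power2)
  qed
  have h2: "G^2*(A+B-2*G) \<le> (1/8)*(B-A)^2*(A+B)"
  proof -
    have e: "(B-A)^2 = (A+B-2*G)*(A+B+2*G)" using GG by (simp add: power2_eq_square algebra_simps)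
    have "8*G^2 \<le> (A+B+2*G)*(A+B)"
    proof -
      have "4*G \<le> A+B+2*G" "2*G \<le> A+B" using SG by auto
      hence "(4*G)*(2*G) \<le> (A+B+2*G)*(A+B)" using G0 by (intro mult_mono) auto
      thus ?thesis by (simp add: power2_eq_square)
    qed
    hence "(A+B-2*G)*(8*G^2) \<le> (A+B-2*G)*((A+B+2*G)*(A+B))" using SG by (intro mult_left_mono) auto
    moreover have "G^2*(A+B-2*G) = (1/8)*((A+B-2*G)*(8*G^2))" by simp
    moreover have "(1/8)*(B-A)^2*(A+B) = (1/8)*((A+B-2*G)*((A+B+2*G)*(A+B)))" by (simp add: e)
    ultimately show ?thesis by linarith
  qed
  have "A*B*((B-X)*(X-A)) \<le> A*B*(X*(A+B-2*G))"
    using h1 assms by (intro mult_left_mono) auto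
  also have "\<dots> = X*(G^2*(A+B-2*G))" using GG by (simp add: algebra_simps)
  also have "\<dots> \<le> X*((1/8)*(B-A)^2*(A+B))" using h2 assms by (intro mult_left_mono) auto
  finally show ?thesis by (simp add: algebra_simps)
qed

lemma cubic_bound:
  fixes A B X a :: real
  assumes "0 \<le> A" "A \<le> B" "0 \<le> a" "a \<le> 1" "0 \<le> X" "X^2 = a*A^2 + (1-a)*B^2"
  shows "a*A^3 + (1-a)*B^3 - X^3 \<le> 3/8*(B-A)^2*X"
proof -
  have BA: "A^2 \<le> B^2" using assms by (intro power_mono) auto
  have "X^2 - A^2 = (1-a)*(B^2-A^2)" by (simp add: assms algebra_simps)
  hence "A^2 \<le> X^2" using BA assms by (smt (verit) mult_nonneg_nonneg)
  hence AX: "A \<le> X" using assms by (meson power2_le_imp_le)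
  have "B^2 - X^2 = a*(B^2-A^2)" by (simp add: assms algebra_simps)
  hence "X^2 \<le> B^2" using BA assms by (smt (verit) mult_nonneg_nonneg)
  hence XB: "X \<le> B" using assms by (smt (verit) power2_le_imp_le)
  show ?thesis
  proof (cases "A = B")
    case True
    then have "X = A" using AX XB by auto
    then show ?thesis using True by (simp add: algebra_simps)
  next
    case False
    hence "A < B" using assms by auto
    hence "A^2 < B^2" using assms by (intro power_strict_mono) auto
    hence pos: "B^2 - A^2 > 0" by simp
    have al: "a*(B^2-A^2) = B^2 - X^2" using assms(6) by (simp add: algebra_simps)
    have id: "(B^2-A^2)*(a*A^3 + (1-a)*B^3 - X^3) = (B-A)*((B-X)*(X-A)*(X*(A+B)+A*B))"
    proof -
      have "(B^2-A^2)*(a*A^3 + (1-a)*B^3 - X^3) = (a*(B^2-A^2))*A^3 + (B^2-A^2 - a*(B^2-A^2))*B^3 - (B^2-A^2)*X^3"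
        by (simp add: algebra_simps)
      also have "\<dots> = (B^2-X^2)*A^3 + (X^2-A^2)*B^3 - (B^2-A^2)*X^3" unfolding al by simp
      also have "\<dots> = (B-A)*((B-X)*(X-A)*(X*(A+B)+A*B))" by (simp add: algebra_simps power2_eq_square power3_eq_cube)
      finally show ?thesis .
    qed
    have am: "(B-X)*(X-A) \<le> (B-A)^2/4"
    proof -
      have "(B-A)^2 - 4*((B-X)*(X-A)) = (2*X - (A+B))^2" by (simp add: power2_eq_square algebra_simps)
      moreover have "(2*X - (A+B))^2 \<ge> 0" by simp
      ultimately show ?thesis by linarith
    qed
    have "(B-X)*(X-A)*(X*(A+B)) \<le> (B-A)^2/4*(X*(A+B))"
      using am assms AX by (intro mult_right_mono) auto
    moreover have "A*B*((B-X)*(X-A)) \<le> (1/8)*(B-A)^2*(A+B)*X" using key_poly assms AX XB by auto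
    ultimately have "(B-X)*(X-A)*(X*(A+B)+A*B) \<le> 3/8*(B-A)^2*(A+B)*X"
      by (simp add: algebra_simps)
    hence "(B-A)*((B-X)*(X-A)*(X*(A+B)+A*B)) \<le> (B-A)*(3/8*(B-A)^2*(A+B)*X)"
      using assms by (intro mult_left_mono) auto
    hence "(B^2-A^2)*(a*A^3 + (1-a)*B^3 - X^3) \<le> (B^2-A^2)*(3/8*(B-A)^2*X)"
      unfolding id by (simp add: power2_eq_square algebra_simps)
    thus ?thesis using pos by simp
  qed
qed
lemma term_bound:
  fixes x y :: real
  assumes "0 \<le> y" "0 < x"
  shows "y*(ln y - ln x) \<le> 2*y*(sqrt y - sqrt x)/sqrt x"
proof (cases "y = 0")
  case True then show ?thesis by simp
next
  case False
  hence y: "y > 0" using assms by auto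
  have sx: "sqrt x > 0" using assms by simp
  have "ln y - ln x = 2*ln (sqrt y / sqrt x)"
    using y assms by (simp add: ln_div ln_sqrt)
  also have "\<dots> \<le> 2*(sqrt y / sqrt x - 1)"
  proof -
    have "ln (sqrt y / sqrt x) \<le> sqrt y / sqrt x - 1" using y sx by (intro ln_le_minus_one) simp
    thus ?thesis by (rule mult_left_mono) simp
  qed
  also have "\<dots> = 2*(sqrt y - sqrt x)/sqrt x" using sx by (simp add: field_simps)
  finally have "ln y - ln x \<le> 2*(sqrt y - sqrt x)/sqrt x" .
  hence "y*(ln y - ln x) \<le> y*(2*(sqrt y - sqrt x)/sqrt x)" using y by (intro mult_left_mono) auto
  also have "\<dots> = 2*y*(sqrt y - sqrt x)/sqrt x" by simp
  finally show ?thesis .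
qed

lemma gap_phi_ord:
  fixes a b al :: real
  assumes "0 \<le> a" "a \<le> b" "0 \<le> al" "al \<le> 1"
  shows "-(al*a+(1-al)*b) * ln (al*a+(1-al)*b) + al*(a*ln a) + (1-al)*(b*ln b)
          \<le> 3/4*(sqrt b - sqrt a)^2"
proof -
  define x where "x = al*a+(1-al)*b"
  have t1: "al*a \<ge> 0" and t2: "(1-al)*b \<ge> 0" using assms by auto
  show ?thesis
  proof (cases "x = 0")
    case True
    hence "al*a = 0" "(1-al)*b = 0" using t1 t2 unfolding x_def by linarith+
    hence "al*(a*ln a) = 0" "(1-al)*(b*ln b) = 0" by (metis mult.assoc mult_zero_left)+
    moreover have "-x*ln x = 0" using True by simp
    moreover have "0 \<le> 3/4*(sqrt b - sqrt a)^2" by simp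
    ultimately show ?thesis unfolding x_def by linarith
  next
    case False
    hence xpos: "x > 0" using t1 t2 unfolding x_def by linarith
    define A B X where "A = sqrt a" and "B = sqrt b" and "X = sqrt x"
    have Xpos: "X > 0" using xpos X_def by simp
    have aA: "a = A^2" and bB: "b = B^2" and xX: "x = X^2" using assms xpos by (auto simp: A_def B_def X_def)
    have A0: "0 \<le> A" and AB: "A \<le> B" using assms by (auto simp: A_def B_def)
    have "-x * ln x + al*(a*ln a) + (1-al)*(b*ln b) = al*(a*(ln a - ln x)) + (1-al)*(b*(ln b - ln x))"
      unfolding x_def by (simp add: algebra_simps)
    also have "\<dots> \<le> al*(2*a*(sqrt a - sqrt x)/sqrt x) + (1-al)*(2*b*(sqrt b - sqrt x)/sqrt x)"
      using term_bound[of a x] term_bound[of b x] assms xpos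
      by (intro add_mono mult_left_mono) auto
    also have "\<dots> = (al*(2*A^2*(A-X)) + (1-al)*(2*B^2*(B-X)))/X"
      using assms Xpos unfolding A_def B_def X_def by (simp add: add_divide_distrib)
    also have "\<dots> = 2*(al*A^3 + (1-al)*B^3 - X^3)/X"
    proof -
      have "X^2 = al*A^2 + (1-al)*B^2" using xX aA bB x_def by simp
      hence X3: "X^3 = X*(al*A^2 + (1-al)*B^2)" by (simp add: power3_eq_cube power2_eq_square)
      have "al*(2*A^2*(A-X)) + (1-al)*(2*B^2*(B-X)) = 2*(al*A^3 + (1-al)*B^3 - X*(al*A^2 + (1-al)*B^2))"
        by (simp add: algebra_simps power3_eq_cube power2_eq_square)
      thus ?thesis using X3 by simp
    qed
    also have "\<dots> \<le> 2*(3/8*(B-A)^2*X)/X"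
      using cubic_bound[of A B al X] A0 AB assms Xpos xX aA bB x_def
      by (intro divide_right_mono mult_left_mono) auto
    also have "\<dots> = 3/4*(sqrt b - sqrt a)^2" using Xpos by (simp add: A_def B_def)
    finally show ?thesis unfolding x_def .
  qed
qed

lemma gap_phi:
  fixes a b al :: real
  assumes "0 \<le> a" "0 \<le> b" "0 \<le> al" "al \<le> 1"
  shows "-(al*a+(1-al)*b) * ln (al*a+(1-al)*b) + al*(a*ln a) + (1-al)*(b*ln b)
          \<le> 3/4*(sqrt b - sqrt a)^2"
proof (cases "a \<le> b")
  case True then show ?thesis using gap_phi_ord assms by blast
next
  case False
  have "-((1-al)*b+(1-(1-al))*a) * ln ((1-al)*b+(1-(1-al))*a) + (1-al)*(b*ln b) + (1-(1-al))*(a*ln a)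
          \<le> 3/4*(sqrt a - sqrt b)^2"
    using gap_phi_ord[of b a "1-al"] False assms by auto
  moreover have "(sqrt a - sqrt b)^2 = (sqrt b - sqrt a)^2" by (simp add: power2_commute)
  ultimately show ?thesis by (simp add: algebra_simps)
qed

lemma h2_eq: "h2 y = -y*ln y - (1-y)*ln(1-y)"
  by (auto simp: h2_def)

lemma gap_h2:
  fixes p q al :: real
  assumes "0 \<le> p" "p \<le> 1" "0 \<le> q" "q \<le> 1" "0 \<le> al" "al \<le> 1"
  shows "h2 (al*p+(1-al)*q) - al*h2 p - (1-al)*h2 q
     \<le> 3/4*((sqrt q - sqrt p)^2 + (sqrt (1-p) - sqrt (1-q))^2)"
proof -
  have g1: "-(al*p+(1-al)*q) * ln (al*p+(1-al)*q) + al*(p*ln p) + (1-al)*(q*ln q)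
          \<le> 3/4*(sqrt q - sqrt p)^2" using gap_phi[of p q al] assms by auto
  have g2: "-(al*(1-p)+(1-al)*(1-q)) * ln (al*(1-p)+(1-al)*(1-q)) + al*((1-p)*ln (1-p)) + (1-al)*((1-q)*ln (1-q))
          \<le> 3/4*(sqrt (1-q) - sqrt (1-p))^2" using gap_phi[of "1-p" "1-q" al] assms by auto
  have e: "1 - (al*p+(1-al)*q) = al*(1-p)+(1-al)*(1-q)" by (simp add: algebra_simps)
  have e2: "(sqrt (1-q) - sqrt (1-p))^2 = (sqrt (1-p) - sqrt (1-q))^2" by (simp add: power2_commute)
  show ?thesis unfolding h2_eq e using g1 g2 e2 by (simp add: algebra_simps)
qed

theorem corollary1:
  fixes n :: nat and p :: "nat \<Rightarrow> real"
  assumes "n \<ge> 1"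
    and "0 \<le> p 0"
    and "\<And>i. i < n \<Longrightarrow> p i \<le> p (Suc i)"
    and "p n \<le> 1"
  shows "\<exists>i\<in>{1..n}. \<forall>\<alpha>\<in>{0..1::real}.
           h2 (\<alpha> * p (i - 1) + (1 - \<alpha>) * p i) - \<alpha> * h2 (p (i - 1)) - (1 - \<alpha>) * h2 (p i)
             \<le> 8 / (real n + 1)^2"
proof -
  have lo: "p 0 \<le> p i" if "i \<le> n" for i
    using that
  proof (induction i)
    case 0 then show ?case by simp
  next
    case (Suc i) then show ?case using assms(3)[of i] by auto
  qed
  have hi: "p i \<le> p n" if "i \<le> n" for i
    using that
  proof (induction "n - i" arbitrary: i)
    case 0 then show ?case by simp
  next
    case (Suc k)
    then have "Suc i \<le> n" "k = n - Suc i" by auto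
    then show ?case using Suc.hyps(1)[of "Suc i"] assms(3)[of i] by auto
  qed
  have p01: "0 \<le> p i \<and> p i \<le> 1" if "i \<le> n" for i
    using lo[OF that] hi[OF that] assms by auto
  define u where "u j = sqrt (p (Suc j)) - sqrt (p j)" for j
  define v where "v j = sqrt (1 - p j) - sqrt (1 - p (Suc j))" for j
  have uv0: "0 \<le> u j" "0 \<le> v j" if "j < n" for j
    using assms(3)[OF that] p01[of j] p01[of "Suc j"] that unfolding u_def v_def by auto
  have uv1: "u j \<le> 1" "v j \<le> 1" if "j < n" for j
  proof -
    have a: "0 \<le> p j" "p j \<le> 1" "0 \<le> p (Suc j)" "p (Suc j) \<le> 1" using p01[of j] p01[of "Suc j"] that by auto
    have "sqrt (p (Suc j)) \<le> 1" "sqrt (1 - p j) \<le> 1" using a by auto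
    moreover have "sqrt (p j) \<ge> 0" "sqrt (1 - p (Suc j)) \<ge> 0" using a by auto
    ultimately show "u j \<le> 1" "v j \<le> 1" unfolding u_def v_def by linarith+
  qed
  have sumu: "(\<Sum>j<n. u j) = sqrt (p n) - sqrt (p 0)"
    unfolding u_def by (rule sum_lessThan_telescope)
  have sumv: "(\<Sum>j<n. v j) = sqrt (1 - p 0) - sqrt (1 - p n)"
  proof -
    have "(\<Sum>j<n. v j) = - (\<Sum>j<n. sqrt (1 - p (Suc j)) - sqrt (1 - p j))"
      unfolding v_def by (simp add: sum_negf[symmetric])
    also have "\<dots> = sqrt (1 - p 0) - sqrt (1 - p n)"
      using sum_lessThan_telescope[of "\<lambda>j. sqrt (1 - p j)" n] by simp
    finally show ?thesis .
  qed
  have "(\<Sum>j<n. u j + v j) \<le> 2"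
  proof -
    have "(\<Sum>j<n. u j + v j) = sqrt (p n) - sqrt (p 0) + (sqrt (1 - p 0) - sqrt (1 - p n))"
      using sumu sumv by (simp add: sum.distrib)
    moreover have "sqrt (p n) \<le> 1" "sqrt (1 - p 0) \<le> 1" "sqrt (p 0) \<ge> 0" "sqrt (1 - p n) \<ge> 0"
      using p01[of 0] p01[of n] by auto
    ultimately show ?thesis by linarith
  qed
  have "\<exists>j<n. u j + v j \<le> 2 / real n"
  proof (rule ccontr)
    assume "\<not> ?thesis"
    hence c: "\<And>j. j < n \<Longrightarrow> 2 / real n < u j + v j" by force
    have "(\<Sum>j<n. 2 / real n) < (\<Sum>j<n. u j + v j)"
      using assms(1) c by (intro sum_strict_mono) (auto simp: lessThan_empty_iff)
    moreover have "(\<Sum>j<n. 2 / real n) = 2" using assms(1) by simp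
    ultimately show False using \<open>(\<Sum>j<n. u j + v j) \<le> 2\<close> by linarith
  qed
  then obtain j where j: "j < n" "u j + v j \<le> 2 / real n" by blast
  have bound: "3/4*((u j)^2 + (v j)^2) \<le> 8 / (real n + 1)^2"
  proof (cases "n = 1")
    case True
    have "(u j)^2 \<le> 1" "(v j)^2 \<le> 1" using uv0[OF j(1)] uv1[OF j(1)] by (auto simp: power_le_one)
    then show ?thesis using True by simp
  next
    case False
    hence n2: "real n \<ge> 2" using assms(1) by simp
    have "(u j)^2 + (v j)^2 \<le> (u j + v j)^2" using uv0[OF j(1)] by (simp add: power2_eq_square algebra_simps)
    also have "\<dots> \<le> (2 / real n)^2" using j uv0[OF j(1)] by (intro power_mono) auto
    finally have s: "(u j)^2 + (v j)^2 \<le> 4 / (real n)^2" by (simp add: power_divide)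
    have "3/4 * (4 / (real n)^2) \<le> 8 / (real n + 1)^2"
    proof -
      have "3 * (real n + 1)^2 \<le> 8 * (real n)^2"
      proof -
        have "(real n)*(5 * real n - 6) \<ge> 2 * 4" using n2 by (intro mult_mono) auto
        thus ?thesis by (simp add: power2_eq_square algebra_simps)
      qed
      thus ?thesis using n2 by (simp add: field_simps)
    qed
    moreover have "3/4*((u j)^2+(v j)^2) \<le> 3/4*(4/(real n)^2)" using s by (rule mult_left_mono) simp
    ultimately show ?thesis by (rule order.trans[rotated])
  qed
  show ?thesis
  proof (intro bexI ballI)
    fix al :: real assume al: "al \<in> {0..1}"
    have "h2 (al * p (Suc j - 1) + (1 - al) * p (Suc j)) - al * h2 (p (Suc j - 1)) - (1 - al) * h2 (p (Suc j))
        \<le> 3/4*((sqrt (p (Suc j)) - sqrt (p j))^2 + (sqrt (1 - p j) - sqrt (1 - p (Suc j)))^2)"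
      using gap_h2[of "p j" "p (Suc j)" al] p01[of j] p01[of "Suc j"] j al by auto
    also have "\<dots> = 3/4*((u j)^2 + (v j)^2)" unfolding u_def v_def by simp
    finally show "h2 (al * p (Suc j - 1) + (1 - al) * p (Suc j)) - al * h2 (p (Suc j - 1)) - (1 - al) * h2 (p (Suc j))
        \<le> 8 / (real n + 1)^2" using bound by linarith
  next
    show "Suc j \<in> {1..n}" using j by auto
  qed
qed

end
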